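(* Let $\mathcal{U}$ and $\mathcal{V}$ be linear subspaces of $\mathbb{R}^n$ with $p := \dim \mathcal{U}$, $q := \dim\mathcal{V}$, $s := \dim(\mathcal{U}\cap\mathcal{V})$, and let $\alpha_1,\alpha_2\in\mathbb{R}$. Then the eigenvalues of $T = \Pi_{\mathcal{U}}^{\alpha_2}\Pi_{\mathcal{V}}^{\alpha_1}$ are $$\{1\}^s,\quad \{(1-\alpha_1)(1-\alpha_2)\}^{s+n-p-q},\quad \{1-\alpha_2\}^{\max(0,q-p)},\quad \{1-\alpha_1\}^{\max(0,p-q)},$$ together with $\lambda_i^{1}$ and $\lambda_i^{2}$ for every $i\in\{s+1,\dots,\min(p,q)\}$, where $$\lambda_i^{1,2} = \tfrac12\left(2-\alpha_1-\alpha_2+\alpha_1\alpha_2\cos^2\theta_i\right)\pm\sqrt{\tfrac14\left(2-\alpha_1-\alpha_2+\alpha_1\alpha_2\cos^2\theta_i\right)^2-(1-\alpha_1)(1-\alpha_2)},$$ and $\{\lambda\}^j$ denotes the eigenvalue $\lambda$ with (possibly zero) multiplicity $j$.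
   Context: For a closed nonempty set $C$, $\Pi_C$ is the (Euclidean) projection onto $C$ and the relaxed projection with parameter $\alpha$ is $\Pi_C^\alpha := (1-\alpha)I+\alpha\Pi_C$. The principal angles $\theta_1\le\theta_2\le\dots\le\theta_{\min(p,q)}$ in $[0,\pi/2]$ between $\mathcal{U}$ and $\mathcal{V}$ are defined recursively by $\cos\theta_k = \max\langle u_k,v_k\rangle$ over $u_k\in\mathcal{U}$, $v_k\in\mathcal{V}$ with $\|u_k\|=\|v_k\|=1$ and $\langle u_k,v_i\rangle=\langle u_i,v_k\rangle=0$ for $i=1,\dots,k-1$; exactly the first $s$ of them are zero. The square root may be complex. *)

theory Defs
  imports "HOL-Analysis.Analysis" "HOL-Computational_Algebra.Polynomial" "HOL-Library.Multiset"
begin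

definition proj :: "'a::euclidean_space set \<Rightarrow> 'a \<Rightarrow> 'a" where
  "proj C x = closest_point C x"

definition relaxed_proj :: "real \<Rightarrow> 'a::euclidean_space set \<Rightarrow> 'a \<Rightarrow> 'a" where
  "relaxed_proj \<alpha> C x = (1 - \<alpha>) *\<^sub>R x + \<alpha> *\<^sub>R proj C x"

definition charpoly :: "real^'n^'n \<Rightarrow> complex poly" where
  "charpoly A = det (\<chi> i j. (if i = j then [:0, 1:] else 0) - [:complex_of_real (A $ i $ j):])"

definition has_eigenvalues_mset :: "(real^'n \<Rightarrow> real^'n) \<Rightarrow> complex multiset \<Rightarrow> bool" where
  "has_eigenvalues_mset f M \<longleftrightarrow> charpoly (matrix f) = (\<Prod>l\<in>#M. [:- l, 1:])"

text \<open>Feasible pairs at step k (0-based) in the recursive definition of principal angles.\<close>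
definition principal_feasible ::
  "'a::euclidean_space set \<Rightarrow> 'a set \<Rightarrow> (nat \<Rightarrow> 'a) \<Rightarrow> (nat \<Rightarrow> 'a) \<Rightarrow> nat \<Rightarrow> ('a \<times> 'a) set" where
  "principal_feasible U V u v k =
     {(x, y). x \<in> U \<and> y \<in> V \<and> norm x = 1 \<and> norm y = 1 \<and>
              (\<forall>i<k. x \<bullet> v i = 0 \<and> u i \<bullet> y = 0)}"

definition principal_vectors ::
  "'a::euclidean_space set \<Rightarrow> 'a set \<Rightarrow> (nat \<Rightarrow> 'a) \<Rightarrow> (nat \<Rightarrow> 'a) \<Rightarrow> bool" where
  "principal_vectors U V u v \<longleftrightarrow>
     (\<forall>k < min (dim U) (dim V).
        (u k, v k) \<in> principal_feasible U V u v k \<and>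
        (\<forall>(x, y) \<in> principal_feasible U V u v k. x \<bullet> y \<le> u k \<bullet> v k))"

definition principal_angle :: "(nat \<Rightarrow> 'a::euclidean_space) \<Rightarrow> (nat \<Rightarrow> 'a) \<Rightarrow> nat \<Rightarrow> real" where
  "principal_angle u v k = arccos (u k \<bullet> v k)"

end

theory Submission
  imports Defs
begin

lemma det_triangular_ord:
  fixes M :: "'a::comm_ring_1^'n^'n" and g :: "'n \<Rightarrow> nat"
  assumes inj: "inj g" and tri: "\<And>i j. g j < g i \<Longrightarrow> M$i$j = 0"
  shows "det M = (\<Prod>i\<in>UNIV. M$i$i)"
proof -
  have key: "\<exists>i. g (p i) < g i" if p: "p permutes UNIV" and ne: "p \<noteq> id" for p
  proof (rule ccontr)
    assume "\<not> ?thesis"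
    then have le: "\<And>i. g i \<le> g (p i)" by (simp add: not_less)
    have eq: "(\<Sum>i\<in>UNIV. g i) = (\<Sum>i\<in>UNIV. g (p i))"
      using sum.permute[OF p, of g] by (simp add: comp_def)
    have "g i = g (p i)" for i
      by (rule sum_mono_inv[OF eq]) (use le in auto)
    then have "p i = i" for i using inj by (metis injD)
    then show False using ne by auto
  qed
  have z: "(\<Prod>i\<in>UNIV. M$i$p i) = 0" if p: "p permutes UNIV" and ne: "p \<noteq> id" for p
  proof -
    obtain i where "g (p i) < g i" using key[OF p ne] by blast
    then have "M$i$p i = 0" using tri by blast
    then show ?thesis by (intro prod_zero) auto
  qed
  have "det M = of_int (sign (id::'n\<Rightarrow>'n)) * (\<Prod>i\<in>UNIV. M$i$id i) +
      (\<Sum>p\<in>{p. p permutes (UNIV::'n set)} - {id}. of_int (sign p) * (\<Prod>i\<in>UNIV. M$i$p i))"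
    unfolding det_def
    by (rule sum.remove) (auto simp: permutes_id finite_permutations)
  also have "(\<Sum>p\<in>{p. p permutes (UNIV::'n set)} - {id}. of_int (sign p) * (\<Prod>i\<in>UNIV. M$i$p i)) = 0"
    by (rule sum.neutral) (auto simp: z)
  finally show ?thesis by (simp add: sign_id)
qed

definition charmat :: "complex^'n^'n \<Rightarrow> complex poly^'n^'n" where
  "charmat B = (\<chi> i j. (if i = j then [:0, 1:] else 0) - [:B $ i $ j:])"

definition cmat :: "real^'n^'n \<Rightarrow> complex^'n^'n" where
  "cmat A = (\<chi> i j. complex_of_real (A $ i $ j))"

definition cpm :: "complex^'n^'n \<Rightarrow> complex poly^'n^'n" where
  "cpm P = (\<chi> i j. [:P $ i $ j:])"

lemma charpoly_charmat: "charpoly A = det (charmat (cmat A))"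
  unfolding charpoly_def charmat_def cmat_def by simp

lemma const_poly_sum: "(\<Sum>x\<in>A. [:f x:]) = [:sum f A:]"
  by (induction A rule: infinite_finite_induct) auto

lemma const_poly_prod: "(\<Prod>x\<in>A. [:f x:]) = [:prod f A:]"
  by (induction A rule: infinite_finite_induct) (auto simp: mult.commute)

lemma const_poly_of_int: "of_int k * [:c:] = [:of_int k * (c::'a::comm_ring_1):]"
  by (simp add: of_int_poly)

lemma det_cpm: "det (cpm P) = [:det P:]"
  unfolding det_def cpm_def
  by (simp only: vec_lambda_beta const_poly_prod const_poly_of_int const_poly_sum)

lemma charmat_alt: "charmat B = mat [:0,1:] - cpm B"
  by (simp add: charmat_def cpm_def mat_def vec_eq_iff)

lemma cpm_mult: "cpm B ** cpm P = cpm (B ** P)"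
  by (simp add: cpm_def matrix_matrix_mult_def vec_eq_iff const_poly_sum mult.commute)

lemma mat_mult_left: "mat k ** A = (\<chi> i j. k * A$i$j)"
  unfolding matrix_matrix_mult_def mat_def
  by (auto simp: if_distrib if_distribR sum.delta'[OF finite] cong: if_cong)

lemma mat_mult_right: "A ** mat k = (\<chi> i j. A$i$j * k)"
  unfolding matrix_matrix_mult_def mat_def
  by (auto simp: if_distrib if_distribR sum.delta'[OF finite] cong: if_cong)

lemma matrix_diff_rdistrib: "((A::'a::ring_1^'n^'m) - B) ** C = A ** C - B ** C"
  by (vector matrix_matrix_mult_def sum_subtractf[symmetric] field_simps)

lemma matrix_diff_ldistrib: "(C::'a::ring_1^'n^'m) ** (A - B) = C ** A - C ** B"
  by (vector matrix_matrix_mult_def sum_subtractf[symmetric] field_simps)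

lemma det_charmat_similar:
  assumes "B ** P = P ** Tr" "det P \<noteq> 0"
  shows "det (charmat B) = det (charmat Tr)"
proof -
  have "charmat B ** cpm P = cpm P ** charmat Tr"
    unfolding charmat_alt matrix_diff_rdistrib matrix_diff_ldistrib cpm_mult assms(1)
      mat_mult_left mat_mult_right
    by (simp add: mult.commute)
  then have "det (charmat B) * [:det P:] = [:det P:] * det (charmat Tr)"
    by (metis det_mul det_cpm)
  then show ?thesis using assms(2) smult_cancel by (simp add: mult.commute)
qed

lemma charpoly_triangular_basis:
  fixes A :: "complex^'n^'n" and z :: "nat \<Rightarrow> complex^'n" and d :: "nat \<Rightarrow> complex"
  assumes span: "vec.span (z ` {..<CARD('n)}) = UNIV"
    and tri: "\<And>k. k < CARD('n) \<Longrightarrow> A *v z k - d k *s z k \<in> vec.span (z ` {..<k})"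
  shows "det (charmat A) = (\<Prod>k<CARD('n). [:- d k, 1:])"
proof -
  define n where "n = CARD('n)"
  have "vec.dim (UNIV::(complex^'n) set) \<le> card (z ` {..<n})"
    by (rule vec.span_card_ge_dim) (use span n_def in auto)
  then have "n \<le> card (z ` {..<n})" using vec_dim_card[where 'a=complex and 'n='n] by (simp add: n_def)
  moreover have "card (z ` {..<n}) \<le> n" using card_image_le[of "{..<n}" z] by simp
  ultimately have injz: "inj_on z {..<n}"
    by (intro eq_card_imp_inj_on) auto
  obtain g where g: "bij_betw g (UNIV::'n set) {..<n}"
    using ex_bij_betw_finite_nat[of "UNIV::'n set"] by (auto simp: n_def lessThan_atLeast0)
  have ginj: "inj g" using g by (simp add: bij_betw_def)
  have glt: "g i < n" for i using g by (auto simp: bij_betw_def)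
  have "\<exists>t. A *v z k - d k *s z k = (\<Sum>l<k. t l *s z l)" if k: "k < n" for k
  proof -
    have "A *v z k - d k *s z k \<in> range (\<lambda>u. \<Sum>v\<in>z ` {..<k}. u v *s v)"
      using tri[of k] k vec.span_finite[of "z ` {..<k}"] by (simp add: n_def)
    then obtain u where u: "A *v z k - d k *s z k = (\<Sum>v\<in>z ` {..<k}. u v *s v)" by blast
    have "inj_on z {..<k}" using injz k by (auto intro: inj_on_subset)
    then have "(\<Sum>v\<in>z ` {..<k}. u v *s v) = (\<Sum>l<k. u (z l) *s z l)"
      by (simp add: sum.reindex)
    with u show ?thesis by (intro exI[of _ "\<lambda>l. u (z l)"]) simp
  qed
  then obtain t where t: "\<And>k. k < n \<Longrightarrow> A *v z k - d k *s z k = (\<Sum>l<k. t k l *s z l)"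
    by metis
  define T' where "T' k l = (if l = k then d k else if l < k then t k l else 0)" for k l
  have Az: "A *v z k = (\<Sum>l<n. T' k l *s z l)" if k: "k < n" for k
  proof -
    have "(\<Sum>l<n. T' k l *s z l) = (\<Sum>l\<in>insert k {..<k}. T' k l *s z l)"
      by (rule sum.mono_neutral_right) (use k in \<open>auto simp: T'_def\<close>)
    also have "\<dots> = d k *s z k + (\<Sum>l<k. t k l *s z l)"
      by (simp add: T'_def)
    also have "\<dots> = A *v z k" using t[OF k] by (simp add: algebra_simps)
    finally show ?thesis by simp
  qed
  define P :: "complex^'n^'n" where "P = (\<chi> i j. z (g j) $ i)"
  define Tr :: "complex^'n^'n" where "Tr = (\<chi> i j. T' (g j) (g i))"
  have reidx: "(\<Sum>m\<in>UNIV. f (g m)) = (\<Sum>l<n. f l)" for f :: "nat \<Rightarrow> complex"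
    using sum.reindex_bij_betw[OF g, of f] by simp
  have AP: "A ** P = P ** Tr"
  proof -
    have "(A ** P)$i$j = (P ** Tr)$i$j" for i j
    proof -
      have "(A ** P)$i$j = (A *v z (g j)) $ i"
        by (simp add: matrix_matrix_mult_def matrix_vector_mult_def P_def)
      also have "\<dots> = (\<Sum>l<n. T' (g j) l * z l $ i)"
        by (simp add: Az[OF glt] sum_component)
      also have "\<dots> = (\<Sum>m\<in>UNIV. T' (g j) (g m) * z (g m) $ i)"
        by (rule reidx[symmetric])
      also have "\<dots> = (P ** Tr)$i$j"
        by (simp add: matrix_matrix_mult_def P_def Tr_def mult.commute)
      finally show ?thesis .
    qed
    then show ?thesis by (simp add: vec_eq_iff)
  qed
  have colP: "column j P = z (g j)" for j
    by (simp add: column_def P_def vec_eq_iff)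
  have "columns P = z ` {..<n}"
  proof -
    have "columns P = (\<lambda>j. z (g j)) ` UNIV" unfolding columns_def colP by auto
    also have "\<dots> = z ` (g ` UNIV)" by auto
    also have "g ` UNIV = {..<n}" using g by (simp add: bij_betw_def)
    finally show ?thesis .
  qed
  then have "vec.span (columns P) = UNIV" using span by (simp add: n_def)
  then obtain B where "P ** B = mat 1"
    using matrix_right_invertible_span_columns by blast
  then have "det P * det B = 1" by (metis det_I det_mul)
  then have detP: "det P \<noteq> 0" by auto
  have "det (charmat A) = det (charmat Tr)"
    by (rule det_charmat_similar[OF AP detP])
  also have "\<dots> = (\<Prod>i\<in>UNIV. charmat Tr $ i $ i)"
    by (rule det_triangular_ord[OF ginj]) (auto simp: charmat_def Tr_def T'_def)
  also have "\<dots> = (\<Prod>i\<in>UNIV. [:- d (g i), 1:])"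
    by (simp add: charmat_def Tr_def T'_def)
  also have "\<dots> = (\<Prod>k<n. [:- d k, 1:])"
    using prod.reindex_bij_betw[OF g, of "\<lambda>k. [:- d k, 1:]"] by simp
  finally show ?thesis by (simp add: n_def)
qed


lemma proj_in:
  fixes S :: "'a::euclidean_space set"
  assumes S: "subspace S"
  shows "proj S x \<in> S"
proof -
  have "closed S" by (rule closed_subspace[OF S])
  moreover have "S \<noteq> {}" using subspace_0[OF S] by auto
  ultimately show ?thesis unfolding proj_def by (rule closest_point_in_set)
qed

lemma proj_orth:
  fixes S :: "'a::euclidean_space set"
  assumes S: "subspace S" and y: "y \<in> S"
  shows "(x - proj S x) \<bullet> y = 0"
proof -
  let ?p = "proj S x"
  have p: "?p \<in> S" using proj_in[OF S] .
  have le: "(x - ?p) \<bullet> (w - ?p) \<le> 0" if "w \<in> S" for w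
    using closest_point_dot[OF subspace_imp_convex[OF S] closed_subspace[OF S] that, of x]
    by (simp add: proj_def)
  have "(x - ?p) \<bullet> ((?p + y) - ?p) \<le> 0" by (rule le) (simp add: S p y subspace_add)
  moreover have "(x - ?p) \<bullet> ((?p - y) - ?p) \<le> 0" by (rule le) (simp add: S p y subspace_diff)
  ultimately show ?thesis by (simp add: inner_diff_right)
qed

lemma proj_unique:
  fixes S :: "'a::euclidean_space set"
  assumes S: "subspace S" and p: "p \<in> S" and orth: "\<And>y. y \<in> S \<Longrightarrow> (x - p) \<bullet> y = 0"
  shows "proj S x = p"
proof -
  have "\<forall>z\<in>S. dist x p \<le> dist x z"
  proof
    fix z assume z: "z \<in> S"
    have pz: "p - z \<in> S" using S p z subspace_diff by blast
    have "(norm (x - z))\<^sup>2 = (norm ((x - p) + (p - z)))\<^sup>2" by simp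
    also have "\<dots> = (norm (x - p))\<^sup>2 + (norm (p - z))\<^sup>2"
      using orth[OF pz] by (intro norm_add_Pythagorean) (simp add: orthogonal_def)
    finally have "(norm (x - p))\<^sup>2 \<le> (norm (x - z))\<^sup>2" by simp
    then show "dist x p \<le> dist x z" by (simp add: dist_norm power2_le_iff_abs_le)
  qed
  then show ?thesis
    unfolding proj_def
    by (rule closest_point_unique[OF subspace_imp_convex[OF S] closed_subspace[OF S] p, symmetric])
qed

lemma proj_self: "subspace S \<Longrightarrow> x \<in> S \<Longrightarrow> proj S x = (x::'a::euclidean_space)"
  by (rule proj_unique) auto

lemma proj_orth_zero:
  fixes S :: "'a::euclidean_space set"
  assumes "subspace S" "\<And>y. y \<in> S \<Longrightarrow> x \<bullet> y = 0"
  shows "proj S x = 0"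
  by (rule proj_unique) (use assms in \<open>auto simp: subspace_0\<close>)

lemma proj_inner_in:
  fixes S :: "'a::euclidean_space set"
  assumes S: "subspace S" and y: "y \<in> S"
  shows "proj S x \<bullet> y = x \<bullet> y"
  using proj_orth[OF S y, of x] by (simp add: inner_diff_left)

lemma proj_linear:
  fixes S :: "'a::euclidean_space set"
  assumes S: "subspace S"
  shows "linear (proj S)"
proof
  fix x y
  show "proj S (x + y) = proj S x + proj S y"
    by (rule proj_unique[OF S]) (auto simp: S proj_in subspace_add inner_diff_left inner_add_left
        proj_inner_in)
next
  fix c x
  show "proj S (c *\<^sub>R x) = c *\<^sub>R proj S x"
  proof (rule proj_unique[OF S])
    show "c *\<^sub>R proj S x \<in> S" by (simp add: S proj_in subspace_scale)
    fix y assume "y \<in> S"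
    then have "(x - proj S x) \<bullet> y = 0" by (rule proj_orth[OF S])
    then show "(c *\<^sub>R x - c *\<^sub>R proj S x) \<bullet> y = 0"
      by (metis inner_scaleR_left mult_zero_right scaleR_right_diff_distrib)
  qed
qed

lemma proj_sym:
  fixes S :: "'a::euclidean_space set"
  assumes S: "subspace S"
  shows "proj S x \<bullet> y = x \<bullet> proj S y"
proof -
  have "(x - proj S x) \<bullet> proj S y = 0" by (rule proj_orth[OF S proj_in[OF S]])
  moreover have "(y - proj S y) \<bullet> proj S x = 0" by (rule proj_orth[OF S proj_in[OF S]])
  ultimately show ?thesis by (simp add: inner_diff_left inner_diff_right inner_commute)
qed

lemma proj_linear_ops:
  fixes S :: "'a::euclidean_space set"
  assumes S: "subspace S"
  shows "proj S (x + y) = proj S x + proj S y" "proj S (x - y) = proj S x - proj S y"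
    "proj S (c *\<^sub>R x) = c *\<^sub>R proj S x" "proj S 0 = 0"
  using proj_linear[OF S] by (auto simp: linear_add linear_diff linear_scale linear_0)


lemma cs_eq:
  fixes y w :: "'a::real_inner"
  assumes "norm y \<le> a" "a \<le> y \<bullet> w" "norm w = 1"
  shows "y = a *\<^sub>R w"
proof -
  have a0: "0 \<le> a" using assms(1) norm_ge_zero order_trans by blast
  have ww: "w \<bullet> w = 1" using assms(3) by (simp add: norm_eq_1)
  have yy: "y \<bullet> y \<le> a\<^sup>2"
    using assms(1) a0 by (simp add: power2_norm_eq_inner[symmetric] power_mono)
  have "(y - a *\<^sub>R w) \<bullet> (y - a *\<^sub>R w) = y \<bullet> y - 2 * a * (y \<bullet> w) + a\<^sup>2 * (w \<bullet> w)"
    by (simp add: inner_diff_left inner_diff_right inner_commute power2_eq_square algebra_simps)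
  also have "\<dots> \<le> a\<^sup>2 - 2 * a * a + a\<^sup>2"
  proof -
    have "a * a \<le> a * (y \<bullet> w)" by (rule mult_left_mono[OF assms(2) a0])
    then show ?thesis using yy ww by simp
  qed
  also have "\<dots> = 0" by (simp add: power2_eq_square)
  finally have "(y - a *\<^sub>R w) \<bullet> (y - a *\<^sub>R w) = 0"
    using inner_ge_zero[of "y - a *\<^sub>R w"] by linarith
  then show ?thesis by simp
qed

lemma orthonormal_family:
  fixes f :: "nat \<Rightarrow> 'a::euclidean_space"
  assumes n1: "\<And>i. i < k \<Longrightarrow> norm (f i) = 1"
    and orth: "\<And>i j. i < k \<Longrightarrow> j < k \<Longrightarrow> i \<noteq> j \<Longrightarrow> f i \<bullet> f j = 0"
  shows "independent (f ` {..<k})" "inj_on f {..<k}" "card (f ` {..<k}) = k"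
proof -
  show inj: "inj_on f {..<k}"
  proof (rule inj_onI)
    fix i j assume "i \<in> {..<k}" "j \<in> {..<k}" "f i = f j"
    then show "i = j" using n1[of i] orth[of i j] by (auto simp: norm_eq_1)
  qed
  show "independent (f ` {..<k})"
  proof (rule pairwise_orthogonal_independent)
    show "pairwise orthogonal (f ` {..<k})"
      unfolding pairwise_def orthogonal_def using orth by auto
    show "0 \<notin> f ` {..<k}" using n1 by force
  qed
  show "card (f ` {..<k}) = k" using card_image[OF inj] by simp
qed

lemma orthonormal_sum_inner:
  fixes f :: "nat \<Rightarrow> 'a::euclidean_space"
  assumes n1: "\<And>i. i < k \<Longrightarrow> norm (f i) = 1"
    and orth: "\<And>i j. i < k \<Longrightarrow> j < k \<Longrightarrow> i \<noteq> j \<Longrightarrow> f i \<bullet> f j = 0"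
    and j: "j < k"
  shows "(\<Sum>i<k. a i *\<^sub>R f i) \<bullet> f j = a j"
proof -
  have "(\<Sum>i<k. a i *\<^sub>R f i) \<bullet> f j = (\<Sum>i<k. a i * (f i \<bullet> f j))"
    by (simp add: inner_sum_left)
  also have "\<dots> = (\<Sum>i<k. if i = j then a j else 0)"
    by (rule sum.cong) (use n1 orth j in \<open>auto simp: norm_eq_1\<close>)
  also have "\<dots> = a j" using j by simp
  finally show ?thesis .
qed

locale PV =
  fixes U V :: "(real^'n) set" and u v :: "nat \<Rightarrow> real^'n"
  assumes U: "subspace U" and V: "subspace V" and pv: "principal_vectors U V u v"
begin

definition "m = min (dim U) (dim V)"
definition "c k = u k \<bullet> v k"

lemma feas:
  assumes "k < m"
  shows "u k \<in> U" "v k \<in> V" "norm (u k) = 1" "norm (v k) = 1"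
    "\<And>i. i < k \<Longrightarrow> u k \<bullet> v i = 0" "\<And>i. i < k \<Longrightarrow> u i \<bullet> v k = 0"
  using pv assms unfolding principal_vectors_def principal_feasible_def m_def by auto

lemma maxc:
  assumes "k < m" "x \<in> U" "y \<in> V" "norm x = 1" "norm y = 1"
    "\<And>i. i < k \<Longrightarrow> x \<bullet> v i = 0" "\<And>i. i < k \<Longrightarrow> u i \<bullet> y = 0"
  shows "x \<bullet> y \<le> c k"
proof -
  have "(x, y) \<in> principal_feasible U V u v k"
    using assms unfolding principal_feasible_def by auto
  then show ?thesis using pv assms(1) unfolding principal_vectors_def m_def c_def by fastforce
qed

lemma c_nonneg: "k < m \<Longrightarrow> 0 \<le> c k"
  using maxc[of k "u k" "- v k"] feas[of k] V
  by (auto simp: subspace_neg c_def)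

lemma c_le1: "k < m \<Longrightarrow> c k \<le> 1"
  using norm_cauchy_schwarz[of "u k" "v k"] feas[of k] by (simp add: c_def)

lemma c_mono: "j \<le> k \<Longrightarrow> k < m \<Longrightarrow> c k \<le> c j"
  using maxc[of j "u k" "v k"] feas[of k] by (simp add: c_def)

lemma cross: "i < m \<Longrightarrow> j < m \<Longrightarrow> i \<noteq> j \<Longrightarrow> u i \<bullet> v j = 0"
  using feas[of i] feas[of j] by (cases "i < j") auto

definition "r = (LEAST k. \<not> (k < m \<and> 0 < c k))"

lemma r_le: "r \<le> m"
  unfolding r_def by (rule Least_le) simp

lemma r_pos: "k < r \<Longrightarrow> k < m \<and> 0 < c k"
  unfolding r_def using not_less_Least by blast

lemma r_zero:
  assumes "r \<le> k" "k < m" shows "c k = 0"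
proof -
  have "\<not> (r < m \<and> 0 < c r)"
    unfolding r_def by (rule LeastI[of _ m]) simp
  then have "c r \<le> 0" using assms by auto
  then show ?thesis using c_mono[OF assms] c_nonneg[OF assms(2)] by simp
qed

lemma stat: "k < r \<Longrightarrow> proj V (u k) = c k *\<^sub>R v k \<and> proj U (v k) = c k *\<^sub>R u k"
proof (induction k rule: less_induct)
  case (less k)
  have km: "k < m" and ck: "0 < c k" using r_pos[OF less.prems] by auto
  note fk = feas[OF km]
  have IH: "\<And>i. i < k \<Longrightarrow> proj V (u i) = c i *\<^sub>R v i \<and> proj U (v i) = c i *\<^sub>R u i"
    using less.IH less.prems by auto
  define y0 where "y0 = proj V (u k)"
  have y0V: "y0 \<in> V" unfolding y0_def by (rule proj_in[OF V])
  have oy: "u i \<bullet> y0 = 0" if "i < k" for i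
  proof -
    have "u i \<bullet> y0 = proj V (u i) \<bullet> u k" unfolding y0_def by (metis proj_sym[OF V] inner_commute)
    also have "\<dots> = c i * (v i \<bullet> u k)" using IH[OF that] by simp
    also have "\<dots> = 0" using fk(5)[OF that] by (simp add: inner_commute)
    finally show ?thesis .
  qed
  have uy: "u k \<bullet> y0 = y0 \<bullet> y0"
    using proj_inner_in[OF V y0V, of "u k"] unfolding y0_def by simp
  have ny: "norm y0 \<le> c k"
  proof (cases "y0 = 0")
    case True then show ?thesis using ck by simp
  next
    case False
    have "u k \<bullet> (y0 /\<^sub>R norm y0) \<le> c k"
      by (rule maxc[OF km fk(1)]) (use False y0V V fk oy in \<open>auto simp: subspace_scale\<close>)
    moreover have "u k \<bullet> (y0 /\<^sub>R norm y0) = norm y0"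
      using False uy by (simp add: power2_norm_eq_inner[symmetric] power2_eq_square)
    ultimately show ?thesis by simp
  qed
  have cy: "c k \<le> y0 \<bullet> v k"
    using proj_inner_in[OF V fk(2), of "u k"] unfolding y0_def c_def by simp
  have A: "proj V (u k) = c k *\<^sub>R v k"
    using cs_eq[OF ny cy fk(4)] unfolding y0_def .
  define x0 where "x0 = proj U (v k)"
  have x0U: "x0 \<in> U" unfolding x0_def by (rule proj_in[OF U])
  have ox: "x0 \<bullet> v i = 0" if "i < k" for i
  proof -
    have "x0 \<bullet> v i = v k \<bullet> proj U (v i)" unfolding x0_def by (simp add: proj_sym[OF U])
    also have "\<dots> = c i * (v k \<bullet> u i)" using IH[OF that] by simp
    also have "\<dots> = 0" using fk(6)[OF that] by (simp add: inner_commute)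
    finally show ?thesis .
  qed
  have xv: "x0 \<bullet> v k = x0 \<bullet> x0"
    using proj_inner_in[OF U x0U, of "v k"] unfolding x0_def by (simp add: inner_commute)
  have nx: "norm x0 \<le> c k"
  proof (cases "x0 = 0")
    case True then show ?thesis using ck by simp
  next
    case False
    have "(x0 /\<^sub>R norm x0) \<bullet> v k \<le> c k"
      by (rule maxc[OF km _ fk(2)]) (use False x0U U fk ox in \<open>auto simp: subspace_scale\<close>)
    moreover have "(x0 /\<^sub>R norm x0) \<bullet> v k = norm x0"
      using False xv by (simp add: power2_norm_eq_inner[symmetric] power2_eq_square)
    ultimately show ?thesis by simp
  qed
  have cx: "c k \<le> x0 \<bullet> u k"
    using proj_inner_in[OF U fk(1), of "v k"] unfolding x0_def c_def by (simp add: inner_commute)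
  have B: "proj U (v k) = c k *\<^sub>R u k"
    using cs_eq[OF nx cx fk(3)] unfolding x0_def .
  show ?case using A B by simp
qed

lemma uu: assumes "i < r" "j < r" "i \<noteq> j" shows "u i \<bullet> u j = 0"
proof -
  have jm: "j < m" "0 < c j" using r_pos[OF assms(2)] by auto
  have im: "i < m" using r_pos[OF assms(1)] by auto
  have "c j * (u i \<bullet> u j) = proj U (v j) \<bullet> u i"
    using stat[OF assms(2)] by (simp add: inner_commute)
  also have "\<dots> = v j \<bullet> u i" by (rule proj_inner_in[OF U feas(1)[OF im]])
  also have "\<dots> = 0" using cross[OF im jm(1) assms(3)] by (simp add: inner_commute)
  finally show ?thesis using jm by simp
qed

lemma vv: assumes "i < r" "j < r" "i \<noteq> j" shows "v i \<bullet> v j = 0"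
proof -
  have jm: "j < m" "0 < c j" using r_pos[OF assms(2)] by auto
  have im: "i < m" using r_pos[OF assms(1)] by auto
  have "c j * (v i \<bullet> v j) = proj V (u j) \<bullet> v i"
    using stat[OF assms(2)] by (simp add: inner_commute)
  also have "\<dots> = u j \<bullet> v i" by (rule proj_inner_in[OF V feas(2)[OF im]])
  also have "\<dots> = 0" using cross[OF jm(1) im] assms(3) by simp
  finally show ?thesis using jm by simp
qed

definition "s0 = (LEAST k. \<not> (k < m \<and> c k = 1))"

lemma s0_le_r: "s0 \<le> r"
  unfolding s0_def
proof (rule Least_le)
  show "\<not> (r < m \<and> c r = 1)" using r_zero[of r] by auto
qed

lemma s0_one: "k < s0 \<Longrightarrow> k < m \<and> c k = 1"
  unfolding s0_def using not_less_Least by blast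

lemma s0_not: "\<not> (s0 < m \<and> c s0 = 1)"
  unfolding s0_def by (rule LeastI[of _ m]) simp

lemma uv_eq: assumes "i < s0" shows "u i = v i"
proof -
  have "i < m" "c i = 1" using s0_one[OF assms] by auto
  then show ?thesis using cs_eq[of "u i" 1 "v i"] feas[of i] by (simp add: c_def)
qed

lemma c_lt1: assumes "s0 \<le> i" "i < r" shows "c i < 1"
proof -
  have im: "i < m" using r_pos[OF assms(2)] by auto
  have "s0 < m" using assms im by linarith
  then have "c s0 \<noteq> 1" using s0_not by auto
  moreover have "c s0 \<le> 1" using c_le1 \<open>s0 < m\<close> by simp
  moreover have "c i \<le> c s0" using c_mono[OF assms(1) im] .
  ultimately show ?thesis by linarith
qed

lemma u_orth_family: "\<And>i. i < r \<Longrightarrow> norm (u i) = 1" "\<And>i j. i < r \<Longrightarrow> j < r \<Longrightarrow> i \<noteq> j \<Longrightarrow> u i \<bullet> u j = 0"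
  using feas r_pos uu by auto

lemma v_orth_family: "\<And>i. i < r \<Longrightarrow> norm (v i) = 1" "\<And>i j. i < r \<Longrightarrow> j < r \<Longrightarrow> i \<noteq> j \<Longrightarrow> v i \<bullet> v j = 0"
  using feas r_pos vv by auto

lemma dim_family_bound:
  fixes f :: "nat \<Rightarrow> real^'n" and S :: "(real^'n) set"
  assumes "\<And>i. i < k \<Longrightarrow> norm (f i) = 1"
    "\<And>i j. i < k \<Longrightarrow> j < k \<Longrightarrow> i \<noteq> j \<Longrightarrow> f i \<bullet> f j = 0"
    "\<And>i. i < k \<Longrightarrow> f i \<in> S"
  shows "k \<le> dim S"
proof -
  have "card (f ` {..<k}) \<le> dim S"
    by (rule independent_card_le_dim) (use assms orthonormal_family(1)[OF assms(1,2)] in auto)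
  then show ?thesis using orthonormal_family(3)[OF assms(1,2)] by simp
qed

lemma noangle:
  assumes a: "a \<in> U" and b: "b \<in> V" and av: "\<And>i. i < r \<Longrightarrow> a \<bullet> v i = 0"
    and ub: "\<And>i. i < r \<Longrightarrow> u i \<bullet> b = 0"
  shows "a \<bullet> b = 0"
proof (rule ccontr)
  assume ab: "a \<bullet> b \<noteq> 0"
  then have a0: "a \<noteq> 0" and b0: "b \<noteq> 0" by auto
  define a' where "a' = a /\<^sub>R norm a"
  define sg where "sg = (if 0 < a \<bullet> b then 1 else - 1 :: real)"
  define b' where "b' = (sg / norm b) *\<^sub>R b"
  have a'U: "a' \<in> U" using a U by (simp add: a'_def subspace_scale)
  have b'V: "b' \<in> V" using b V by (simp add: b'_def subspace_scale)
  have na: "norm a' = 1" using a0 by (simp add: a'_def)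
  have nb: "norm b' = 1" using b0 by (simp add: b'_def sg_def)
  have pos: "0 < a' \<bullet> b'"
    using ab a0 b0 by (auto simp: a'_def b'_def sg_def divide_simps)
  show False
  proof (cases "r < m")
    case True
    have "a' \<bullet> b' \<le> c r"
      by (rule maxc[OF True a'U b'V na nb]) (use av ub in \<open>auto simp: a'_def b'_def\<close>)
    then show False using r_zero[of r] True pos by simp
  next
    case False
    then have rm: "r = m" using r_le by simp
    have au: "a' \<bullet> u i = 0" if "i < r" for i
    proof -
      have "c i * (a \<bullet> u i) = proj U (v i) \<bullet> a" using stat[OF that] by (simp add: inner_commute)
      also have "\<dots> = v i \<bullet> a" by (rule proj_inner_in[OF U a])
      finally have "c i * (a \<bullet> u i) = 0" using av[OF that] by (simp add: inner_commute)
      then show ?thesis using r_pos[OF that] by (simp add: a'_def)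
    qed
    have bv: "b' \<bullet> v i = 0" if "i < r" for i
    proof -
      have "c i * (b \<bullet> v i) = proj V (u i) \<bullet> b" using stat[OF that] by (simp add: inner_commute)
      also have "\<dots> = u i \<bullet> b" by (rule proj_inner_in[OF V b])
      finally have "c i * (b \<bullet> v i) = 0" using ub[OF that] by simp
      then show ?thesis using r_pos[OF that] by (simp add: b'_def)
    qed
    have "Suc m \<le> dim U"
      by (rule dim_family_bound[where f="u(m := a')"])
        (use rm u_orth_family au a'U na feas r_pos in \<open>auto simp: inner_commute less_Suc_eq\<close>)
    moreover have "Suc m \<le> dim V"
      by (rule dim_family_bound[where f="v(m := b')"])
        (use rm v_orth_family bv b'V nb feas r_pos in \<open>auto simp: inner_commute less_Suc_eq\<close>)
    ultimately show False by (simp add: m_def)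
  qed
qed

lemma dim_UV: "dim (U \<inter> V) = s0"
proof -
  have s0r: "s0 \<le> r" by (rule s0_le_r)
  have fam1: "\<And>i. i < s0 \<Longrightarrow> norm (u i) = 1" "\<And>i j. i < s0 \<Longrightarrow> j < s0 \<Longrightarrow> i \<noteq> j \<Longrightarrow> u i \<bullet> u j = 0"
    using u_orth_family s0r by auto
  have inUV: "u i \<in> U \<inter> V" if "i < s0" for i
    using feas[of i] uv_eq[OF that] s0_one[OF that] by auto
  have sub: "U \<inter> V \<subseteq> span (u ` {..<s0})"
  proof
    fix w assume w: "w \<in> U \<inter> V"
    define w' where "w' = w - (\<Sum>i<s0. (w \<bullet> u i) *\<^sub>R u i)"
    have sUV: "subspace (U \<inter> V)" using U V by (rule subspace_inter)
    have w'UV: "w' \<in> U \<inter> V"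
      unfolding w'_def using w inUV sUV
      by (intro subspace_diff[OF sUV] subspace_sum[OF sUV] subspace_scale[OF sUV]) auto
    have w'u: "w' \<bullet> u j = 0" if "j < s0" for j
      using orthonormal_sum_inner[where f=u and k=s0, OF fam1 that, where a="\<lambda>i. w \<bullet> u i"] by (simp add: w'_def inner_diff_left)
    have "w' = 0"
    proof (rule ccontr)
      assume nz: "w' \<noteq> 0"
      define x where "x = w' /\<^sub>R norm w'"
      have xUV: "x \<in> U \<inter> V" unfolding x_def by (rule subspace_scale[OF sUV w'UV])
      have nx: "norm x = 1" using nz by (simp add: x_def)
      have xu: "x \<bullet> u j = 0" if "j < s0" for j using w'u[OF that] by (simp add: x_def)
      show False
      proof (cases "s0 < m")
        case True
        have "x \<bullet> x \<le> c s0"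
          by (rule maxc[OF True]) (use xUV nx xu uv_eq in \<open>auto simp: inner_commute\<close>)
        then have "c s0 = 1" using c_le1[OF True] nx by (simp add: norm_eq_1)
        then show False using s0_not True by simp
      next
        case False
        then have sm: "s0 = m" using s0r r_le by simp
        have "Suc m \<le> dim U"
          by (rule dim_family_bound[where f="u(m := x)"])
            (use sm fam1 xu xUV nx inUV in \<open>auto simp: inner_commute less_Suc_eq\<close>)
        moreover have "Suc m \<le> dim V"
          by (rule dim_family_bound[where f="u(m := x)"])
            (use sm fam1 xu xUV nx inUV in \<open>auto simp: inner_commute less_Suc_eq\<close>)
        ultimately show False by (simp add: m_def)
      qed
    qed
    then have "w = (\<Sum>i<s0. (w \<bullet> u i) *\<^sub>R u i)" by (simp add: w'_def)
    also have "\<dots> \<in> span (u ` {..<s0})"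
      by (intro span_sum span_mul span_base) auto
    finally show "w \<in> span (u ` {..<s0})" .
  qed
  have "card (u ` {..<s0}) = dim (U \<inter> V)"
    by (rule basis_card_eq_dim) (use inUV sub orthonormal_family(1)[OF fam1] in auto)
  then show ?thesis using orthonormal_family(3)[OF fam1] by simp
qed

end


definition cvec :: "real^'n \<Rightarrow> complex^'n" where
  "cvec x = (\<chi> i. complex_of_real (x $ i))"

lemma cvec_add: "cvec (x + y) = cvec x + cvec y"
  by (simp add: cvec_def vec_eq_iff)

lemma cvec_diff: "cvec (x - y) = cvec x - cvec y"
  by (simp add: cvec_def vec_eq_iff)

lemma cvec_scale: "cvec (a *\<^sub>R x) = complex_of_real a *s cvec x"
  by (simp add: cvec_def vec_eq_iff)

lemma cvec_zero: "cvec 0 = 0"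
  by (simp add: cvec_def vec_eq_iff)

lemma cmat_cvec: "cmat M *v cvec x = cvec (M *v x)"
  by (simp add: cmat_def cvec_def matrix_vector_mult_def vec_eq_iff)

lemma mv_scale: "(A::complex^'n^'n) *v (a *s x) = a *s (A *v x)"
  by (simp add: matrix_vector_mult_def vec_eq_iff sum_distrib_left mult.left_commute)

lemma complex_vec_decomp:
  "(z::complex^'n) = cvec (\<chi> i. Re (z$i)) + \<i> *s cvec (\<chi> i. Im (z$i))"
  by (simp add: cvec_def vec_eq_iff complex_eq_iff)

lemma block2:
  fixes A :: "complex^'n^'n" and X Y :: "complex^'n"
  assumes AX: "A *v X = a *s X + d *s Y" and AY: "A *v Y = bb *s X + e *s Y"
    and sum: "l1 + l2 = a + e" and prod: "l1 * l2 = a * e - bb * d"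
  shows "\<exists>Z1 Z2 \<mu>. A *v Z1 = l1 *s Z1 \<and> A *v Z2 = l2 *s Z2 + \<mu> *s Z1 \<and>
           X \<in> vec.span {Z1, Z2} \<and> Y \<in> vec.span {Z1, Z2}"
proof -
  have quad: "l1 * l1 - (a + e) * l1 + (a * e - bb * d) = 0"
  proof -
    have "l2 = a + e - l1" using sum by (simp add: algebra_simps)
    then show ?thesis using prod by algebra
  qed
  have l2: "l2 = a + e - l1" using sum by (simp add: algebra_simps)
  show ?thesis
  proof (cases "bb = 0")
    case False
    define Z1 where "Z1 = bb *s X + (l1 - a) *s Y"
    have "A *v Z1 = l1 *s Z1"
    proof -
      have "A *v Z1 = bb *s (A *v X) + (l1 - a) *s (A *v Y)"
        by (simp add: Z1_def matrix_vector_right_distrib matrix_vector_mult_diff_distrib mv_scale)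
      also have "\<dots> = (bb * a + (l1 - a) * bb) *s X + (bb * d + (l1 - a) * e) *s Y"
        by (simp add: AX AY vec_eq_iff algebra_simps)
      also have "\<dots> = l1 *s Z1"
      proof -
        have e1: "bb * d + (l1 - a) * e = l1 * (l1 - a)"
          using quad by (simp add: algebra_simps)
        have e2: "bb * a + (l1 - a) * bb = l1 * bb" by (simp add: algebra_simps)
        have "(bb * a + (l1 - a) * bb) *s X + (bb * d + (l1 - a) * e) *s Y
              = (l1 * bb) *s X + (l1 * (l1 - a)) *s Y" by (simp only: e1 e2)
        also have "\<dots> = l1 *s Z1" by (simp add: Z1_def vec_eq_iff algebra_simps)
        finally show ?thesis .
      qed
      finally show ?thesis .
    qed
    moreover have "A *v Y = l2 *s Y + 1 *s Z1"
      by (simp add: AY Z1_def l2 vec_eq_iff algebra_simps)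
    moreover have "Y \<in> vec.span {Z1, Y}" by (simp add: vec.span_base)
    moreover have "X \<in> vec.span {Z1, Y}"
    proof -
      have "X = (1 / bb) *s Z1 - ((l1 - a) / bb) *s Y"
        using False by (simp add: Z1_def vec_eq_iff field_simps)
      also have "\<dots> \<in> vec.span {Z1, Y}"
        by (intro vec.span_diff vec.span_scale vec.span_base) auto
      finally show ?thesis .
    qed
    ultimately show ?thesis by blast
  next
    case True
    note bb0 = True
    show ?thesis
    proof (cases "l1 = e")
      case True
      have "A *v Y = l1 *s Y" using AY bb0 True by (simp add: vec_eq_iff)
      moreover have "A *v X = l2 *s X + d *s Y" using AX True l2 by simp
      moreover have "X \<in> vec.span {Y, X}" "Y \<in> vec.span {Y, X}" by (auto simp: vec.span_base)
      ultimately show ?thesis by blast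
    next
      case False
      have "(l1 - a) * (l1 - e) = 0" using quad bb0 by (simp add: algebra_simps)
      then have l1a: "l1 = a" using False by simp
      then have ae: "e - a \<noteq> 0" using False by simp
      define Z1 where "Z1 = (e - a) *s X - d *s Y"
      have "A *v Z1 = l1 *s Z1"
        unfolding Z1_def using AX AY bb0 l1a
        by (simp add: matrix_vector_mult_diff_distrib mv_scale vec_eq_iff algebra_simps)
      moreover have "A *v Y = l2 *s Y + 0 *s Z1" using AY bb0 l2 l1a by (simp add: vec_eq_iff)
      moreover have "Y \<in> vec.span {Z1, Y}" by (simp add: vec.span_base)
      moreover have "X \<in> vec.span {Z1, Y}"
      proof -
        define \<iota> where "\<iota> = inverse (e - a)"
        have k: "\<iota> * (e - a) = 1" using ae by (simp add: \<iota>_def)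
        have "X = \<iota> *s Z1 + (d * \<iota>) *s Y"
        proof -
          have "X $ i = \<iota> * e * X $ i - \<iota> * a * X $ i" for i
            using k by algebra
          then show ?thesis by (simp add: Z1_def vec_eq_iff)
        qed
        also have "\<dots> \<in> vec.span {Z1, Y}"
          by (intro vec.span_add vec.span_scale vec.span_base) auto
        finally show ?thesis .
      qed
      ultimately show ?thesis by blast
    qed
  qed
qed

lemma pair_poly:
  fixes x1 y1 x2 y2 :: complex
  assumes "x1 + y1 = x2 + y2" "x1 * y1 = x2 * y2"
  shows "[:- x1, 1:] * [:- y1, 1:] = [:- x2, 1:] * [:- y2, 1:]"
proof -
  have "[:- x, 1:] * [:- y, 1:] = [:x * y, - (x + y), 1:]" for x y :: complex
    by (simp add: algebra_simps)
  then show ?thesis using assms by metis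
qed

locale PVT = PV U V u v for U V :: "(real^'n) set" and u v +
  fixes \<alpha>1 \<alpha>2 :: real
begin

definition "T x = relaxed_proj \<alpha>2 U (relaxed_proj \<alpha>1 V x)"

lemma T_expand: "T x = (1 - \<alpha>2) *\<^sub>R ((1 - \<alpha>1) *\<^sub>R x + \<alpha>1 *\<^sub>R proj V x)
   + \<alpha>2 *\<^sub>R ((1 - \<alpha>1) *\<^sub>R proj U x + \<alpha>1 *\<^sub>R proj U (proj V x))"
  unfolding T_def relaxed_proj_def by (simp add: proj_linear_ops[OF U])

lemma T_linear: "linear T"
proof (rule linearI)
  fix x y
  show "T (x + y) = T x + T y"
    unfolding T_expand by (simp add: proj_linear_ops[OF U] proj_linear_ops[OF V] algebra_simps)
next
  fix a x
  show "T (a *\<^sub>R x) = a *\<^sub>R T x"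
    unfolding T_expand by (simp add: proj_linear_ops[OF U] proj_linear_ops[OF V] algebra_simps)
qed

lemma T_UV: "x \<in> U \<Longrightarrow> x \<in> V \<Longrightarrow> T x = x"
  unfolding T_expand by (simp add: proj_self U V algebra_simps)

lemma T_U0: "x \<in> U \<Longrightarrow> proj V x = 0 \<Longrightarrow> T x = (1 - \<alpha>1) *\<^sub>R x"
  unfolding T_expand by (simp add: proj_self U V proj_linear_ops[OF U] algebra_simps)

lemma T_V0: "x \<in> V \<Longrightarrow> proj U x = 0 \<Longrightarrow> T x = (1 - \<alpha>2) *\<^sub>R x"
  unfolding T_expand by (simp add: proj_self U V algebra_simps)

lemma T_00: "proj U x = 0 \<Longrightarrow> proj V x = 0 \<Longrightarrow> T x = ((1 - \<alpha>1) * (1 - \<alpha>2)) *\<^sub>R x"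
  unfolding T_expand by (simp add: proj_linear_ops[OF U] algebra_simps)

lemma T_u: assumes "i < r"
  shows "T (u i) = ((1 - \<alpha>1) + \<alpha>1 * \<alpha>2 * (c i)\<^sup>2) *\<^sub>R u i + ((1 - \<alpha>2) * \<alpha>1 * c i) *\<^sub>R v i"
proof -
  have im: "i < m" using r_pos[OF assms] by simp
  note f = feas[OF im] and st = stat[OF assms]
  show ?thesis unfolding T_expand
    by (simp add: st proj_self[OF U f(1)] proj_linear_ops[OF U] algebra_simps power2_eq_square)
qed

lemma T_v: assumes "i < r"
  shows "T (v i) = (\<alpha>2 * c i) *\<^sub>R u i + (1 - \<alpha>2) *\<^sub>R v i"
proof -
  have im: "i < m" using r_pos[OF assms] by simp
  note f = feas[OF im] and st = stat[OF assms]
  show ?thesis unfolding T_expand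
    by (simp add: st proj_self[OF V f(2)] proj_linear_ops[OF U] algebra_simps)
qed

definition "A = cmat (matrix T)"

lemma A_cvec: "A *v cvec x = cvec (T x)"
  unfolding A_def cmat_cvec
  using matrix_works[OF linear_matrix_vector_mul_eq[THEN iffD2, OF T_linear]] by simp

end


context PVT
begin

definition "SU = span (u ` {..<r})"
definition "SV = span (v ` {..<r})"
definition "U' = {y \<in> U. \<forall>x\<in>SU. orthogonal x y}"
definition "V' = {y \<in> V. \<forall>x\<in>SV. orthogonal x y}"
definition "W = {x + y |x y. x \<in> U \<and> y \<in> V}"
definition "Y = {y \<in> UNIV. \<forall>x\<in>W. orthogonal x y}"

lemma subspaces: "subspace U'" "subspace V'" "subspace W" "subspace Y"
proof -
  show "subspace U'" unfolding U'_def
    using subspace_inter[OF U subspace_orthogonal_to_vectors[of SU]] by (simp add: Int_def)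
  show "subspace V'" unfolding V'_def
    using subspace_inter[OF V subspace_orthogonal_to_vectors[of SV]] by (simp add: Int_def)
  show "subspace W" unfolding W_def by (rule subspace_sums[OF U V])
  show "subspace Y" unfolding Y_def using subspace_orthogonal_to_vectors[of W] by simp
qed

lemma dim_SU: "dim SU = r"
  unfolding SU_def dim_span
  using dim_eq_card_independent[OF orthonormal_family(1)[OF u_orth_family]]
    orthonormal_family(3)[OF u_orth_family] by simp

lemma dim_SV: "dim SV = r"
  unfolding SV_def dim_span
  using dim_eq_card_independent[OF orthonormal_family(1)[OF v_orth_family]]
    orthonormal_family(3)[OF v_orth_family] by simp

lemma u_in: "i < r \<Longrightarrow> u i \<in> U" using feas r_pos by blast
lemma v_in: "i < r \<Longrightarrow> v i \<in> V" using feas r_pos by blast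

lemma dim_U': "dim U' + r = dim U"
proof -
  have "SU \<subseteq> U" unfolding SU_def by (rule span_minimal) (use u_in U in auto)
  then show ?thesis
    using dim_subspace_orthogonal_to_vectors[OF subspace_span[of "u ` {..<r}"] U] dim_SU
    unfolding U'_def SU_def by simp
qed

lemma dim_V': "dim V' + r = dim V"
proof -
  have "SV \<subseteq> V" unfolding SV_def by (rule span_minimal) (use v_in V in auto)
  then show ?thesis
    using dim_subspace_orthogonal_to_vectors[OF subspace_span[of "v ` {..<r}"] V] dim_SV
    unfolding V'_def SV_def by simp
qed

lemma dim_Y: "dim Y + dim W = CARD('n)"
  using dim_subspace_orthogonal_to_vectors[OF subspaces(3) subspace_UNIV] unfolding Y_def by simp

lemma dim_W: "dim W + s0 = dim U + dim V"
  using dim_sums_Int[OF U V] dim_UV unfolding W_def by simp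

lemma U'_orth_v: assumes "x \<in> U'" "i < r" shows "x \<bullet> v i = 0"
proof -
  have xU: "x \<in> U" using assms unfolding U'_def by auto
  have "u i \<in> SU" unfolding SU_def using assms(2) by (auto intro: span_base)
  then have xu: "x \<bullet> u i = 0" using assms(1) unfolding U'_def orthogonal_def by (auto simp: inner_commute)
  have "x \<bullet> v i = proj U (v i) \<bullet> x" using proj_inner_in[OF U xU, of "v i"] by (simp add: inner_commute)
  also have "\<dots> = c i * (u i \<bullet> x)" using stat[OF assms(2)] by simp
  finally show ?thesis using xu by (simp add: inner_commute)
qed

lemma V'_orth_u: assumes "x \<in> V'" "i < r" shows "u i \<bullet> x = 0"
proof -
  have xV: "x \<in> V" using assms unfolding V'_def by auto
  have "v i \<in> SV" unfolding SV_def using assms(2) by (auto intro: span_base)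
  then have xv: "v i \<bullet> x = 0" using assms(1) unfolding V'_def orthogonal_def by auto
  have "u i \<bullet> x = proj V (u i) \<bullet> x" using proj_inner_in[OF V xV, of "u i"] by simp
  also have "\<dots> = c i * (v i \<bullet> x)" using stat[OF assms(2)] by simp
  finally show ?thesis using xv by simp
qed

lemma T_U': assumes "x \<in> U'" shows "T x = (1 - \<alpha>1) *\<^sub>R x"
proof -
  have xU: "x \<in> U" using assms unfolding U'_def by auto
  define b where "b = proj V x"
  have bV: "b \<in> V" unfolding b_def by (rule proj_in[OF V])
  have ub: "u i \<bullet> b = 0" if "i < r" for i
  proof -
    have "u i \<bullet> b = proj V (u i) \<bullet> x" unfolding b_def by (metis proj_sym[OF V] inner_commute)
    also have "\<dots> = c i * (v i \<bullet> x)" using stat[OF that] by simp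
    finally show ?thesis using U'_orth_v[OF assms that] by (simp add: inner_commute)
  qed
  have "x \<bullet> b = 0" by (rule noangle[OF xU bV U'_orth_v[OF assms] ub])
  moreover have "b \<bullet> b = x \<bullet> b" unfolding b_def by (rule proj_inner_in[OF V proj_in[OF V]])
  ultimately have "b = 0" by simp
  then show ?thesis using T_U0[OF xU] by (simp add: b_def)
qed

lemma T_V': assumes "x \<in> V'" shows "T x = (1 - \<alpha>2) *\<^sub>R x"
proof -
  have xV: "x \<in> V" using assms unfolding V'_def by auto
  define a where "a = proj U x"
  have aU: "a \<in> U" unfolding a_def by (rule proj_in[OF U])
  have av: "a \<bullet> v i = 0" if "i < r" for i
  proof -
    have "a \<bullet> v i = proj U (v i) \<bullet> x" unfolding a_def by (metis proj_sym[OF U] inner_commute)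
    also have "\<dots> = c i * (u i \<bullet> x)" using stat[OF that] by simp
    finally show ?thesis using V'_orth_u[OF assms that] by simp
  qed
  have "a \<bullet> x = 0" by (rule noangle[OF aU xV av V'_orth_u[OF assms]])
  moreover have "a \<bullet> a = x \<bullet> a" unfolding a_def by (rule proj_inner_in[OF U proj_in[OF U]])
  ultimately have "a = 0" by (simp add: inner_commute)
  then show ?thesis using T_V0[OF xV] by (simp add: a_def)
qed

lemma T_Y: assumes "y \<in> Y" shows "T y = ((1 - \<alpha>1) * (1 - \<alpha>2)) *\<^sub>R y"
proof -
  have "\<And>x. x \<in> U \<Longrightarrow> y \<bullet> x = 0"
  proof -
    fix x assume "x \<in> U"
    then have "x + 0 \<in> W" unfolding W_def using subspace_0[OF V] by blast
    then show "y \<bullet> x = 0" using assms unfolding Y_def orthogonal_def by (auto simp: inner_commute)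
  qed
  then have "proj U y = 0" by (rule proj_orth_zero[OF U])
  moreover have "\<And>x. x \<in> V \<Longrightarrow> y \<bullet> x = 0"
  proof -
    fix x assume "x \<in> V"
    then have "0 + x \<in> W" unfolding W_def using subspace_0[OF U] by blast
    then show "y \<bullet> x = 0" using assms unfolding Y_def orthogonal_def by (auto simp: inner_commute)
  qed
  then have "proj V y = 0" by (rule proj_orth_zero[OF V])
  ultimately show ?thesis by (rule T_00)
qed

lemma T_s0: "i < s0 \<Longrightarrow> T (u i) = u i"
  using T_UV feas s0_one uv_eq by metis

lemma U_decomp: assumes "x \<in> U" shows "x - (\<Sum>i<r. (x \<bullet> u i) *\<^sub>R u i) \<in> U'"
proof -
  define x' where "x' = x - (\<Sum>i<r. (x \<bullet> u i) *\<^sub>R u i)"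
  have "x' \<in> U" unfolding x'_def using assms u_in
    by (intro subspace_diff[OF U] subspace_sum[OF U] subspace_scale[OF U]) auto
  moreover have "orthogonal y x'" if "y \<in> SU" for y
  proof -
    have "orthogonal x' y"
    proof (rule orthogonal_to_span)
      show "y \<in> span (u ` {..<r})" using that unfolding SU_def .
      fix z assume "z \<in> u ` {..<r}"
      then obtain j where j: "j < r" "z = u j" by auto
      show "orthogonal x' z"
        using orthonormal_sum_inner[where f=u and k=r, OF u_orth_family j(1), where a="\<lambda>i. x \<bullet> u i"] j
        by (simp add: x'_def orthogonal_def inner_diff_left)
    qed
    then show ?thesis by (simp add: orthogonal_commute)
  qed
  ultimately show ?thesis unfolding U'_def x'_def by auto
qed

lemma V_decomp: assumes "x \<in> V" shows "x - (\<Sum>i<r. (x \<bullet> v i) *\<^sub>R v i) \<in> V'"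
proof -
  define x' where "x' = x - (\<Sum>i<r. (x \<bullet> v i) *\<^sub>R v i)"
  have "x' \<in> V" unfolding x'_def using assms v_in
    by (intro subspace_diff[OF V] subspace_sum[OF V] subspace_scale[OF V]) auto
  moreover have "orthogonal y x'" if "y \<in> SV" for y
  proof -
    have "orthogonal x' y"
    proof (rule orthogonal_to_span)
      show "y \<in> span (v ` {..<r})" using that unfolding SV_def .
      fix z assume "z \<in> v ` {..<r}"
      then obtain j where j: "j < r" "z = v j" by auto
      show "orthogonal x' z"
        using orthonormal_sum_inner[where f=v and k=r, OF v_orth_family j(1), where a="\<lambda>i. x \<bullet> v i"] j
        by (simp add: x'_def orthogonal_def inner_diff_left)
    qed
    then show ?thesis by (simp add: orthogonal_commute)
  qed
  ultimately show ?thesis unfolding V'_def x'_def by auto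
qed

lemma building_blocks_span:
  assumes C: "subspace C"
    and Cu: "\<And>i. i < r \<Longrightarrow> u i \<in> C" and Cv: "\<And>i. i < r \<Longrightarrow> v i \<in> C"
    and CU': "U' \<subseteq> C" and CV': "V' \<subseteq> C" and CY: "Y \<subseteq> C"
  shows "x \<in> C"
proof -
  have UC: "a \<in> C" if "a \<in> U" for a
  proof -
    have "a = (a - (\<Sum>i<r. (a \<bullet> u i) *\<^sub>R u i)) + (\<Sum>i<r. (a \<bullet> u i) *\<^sub>R u i)" by simp
    also have "\<dots> \<in> C"
      using U_decomp[OF that] CU' Cu
      by (intro subspace_add[OF C] subspace_sum[OF C] subspace_scale[OF C]) auto
    finally show ?thesis .
  qed
  have VC: "b \<in> C" if "b \<in> V" for b
  proof -
    have "b = (b - (\<Sum>i<r. (b \<bullet> v i) *\<^sub>R v i)) + (\<Sum>i<r. (b \<bullet> v i) *\<^sub>R v i)" by simp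
    also have "\<dots> \<in> C"
      using V_decomp[OF that] CV' Cv
      by (intro subspace_add[OF C] subspace_sum[OF C] subspace_scale[OF C]) auto
    finally show ?thesis .
  qed
  obtain y z where y: "y \<in> span W" and z: "\<And>w. w \<in> span W \<Longrightarrow> orthogonal z w" and xyz: "x = y + z"
    using orthogonal_subspace_decomp_exists[of W x] by blast
  have "y \<in> W" using y span_eq_iff subspaces(3) by blast
  then obtain a b where "y = a + b" "a \<in> U" "b \<in> V" unfolding W_def by blast
  then have yC: "y \<in> C" using UC VC subspace_add[OF C] by blast
  have "z \<in> Y" unfolding Y_def using z span_base by (force simp: orthogonal_commute)
  then have "z \<in> C" using CY by auto
  then show ?thesis using xyz yC subspace_add[OF C] by auto
qed

end


lemma prod_pairs: "(\<Prod>k<2*(N::nat). g k) = (\<Prod>j<N. g (2*j) * (g (2*j+1) :: 'a::comm_monoid_mult))"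
proof (induction N)
  case 0 then show ?case by simp
next
  case (Suc N)
  have "{..<2 * Suc N} = insert (2*N+1) (insert (2*N) {..<2*N})" by auto
  then have "(\<Prod>k<2 * Suc N. g k) = g (2*N+1) * (g (2*N) * (\<Prod>k<2*N. g k))" by simp
  then show ?case using Suc by (simp add: ac_simps)
qed

lemma prod_mset_image_sum:
  "prod_mset (image_mset f (sum N I)) = (\<Prod>i\<in>I. prod_mset (image_mset f (N i)))"
  by (induction I rule: infinite_finite_induct) auto

context PVT
begin

definition "bq i = complex_of_real (2 - \<alpha>1 - \<alpha>2 + \<alpha>1 * \<alpha>2 * (cos (principal_angle u v i))\<^sup>2)"
definition "cc = complex_of_real ((1 - \<alpha>1) * (1 - \<alpha>2))"
definition "lam1 i = bq i / 2 + csqrt ((bq i / 2)\<^sup>2 - cc)"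
definition "lam2 i = bq i / 2 - csqrt ((bq i / 2)\<^sup>2 - cc)"

lemma lam_sum: "lam1 i + lam2 i = bq i"
  by (simp add: lam1_def lam2_def)

lemma lam_prod: "lam1 i * lam2 i = cc"
proof -
  have "lam1 i * lam2 i = (bq i / 2)\<^sup>2 - (csqrt ((bq i / 2)\<^sup>2 - cc))\<^sup>2"
    unfolding lam1_def lam2_def by (simp add: power2_eq_square algebra_simps)
  then show ?thesis by simp
qed

lemma cos_theta: "i < m \<Longrightarrow> cos (principal_angle u v i) = c i"
  using c_nonneg[of i] c_le1[of i] by (simp add: principal_angle_def c_def)

lemma bq_c: "i < m \<Longrightarrow> bq i = complex_of_real (2 - \<alpha>1 - \<alpha>2 + \<alpha>1 * \<alpha>2 * (c i)\<^sup>2)"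
  by (simp add: bq_def cos_theta)

lemma block_exists:
  assumes "i < r"
  shows "\<exists>Z1 Z2 \<mu>. A *v Z1 = lam1 i *s Z1 \<and> A *v Z2 = lam2 i *s Z2 + \<mu> *s Z1 \<and>
           cvec (u i) \<in> vec.span {Z1, Z2} \<and> cvec (v i) \<in> vec.span {Z1, Z2}"
proof (rule block2)
  have im: "i < m" using r_pos[OF assms] by simp
  show "A *v cvec (u i) = complex_of_real ((1 - \<alpha>1) + \<alpha>1 * \<alpha>2 * (c i)\<^sup>2) *s cvec (u i)
      + complex_of_real ((1 - \<alpha>2) * \<alpha>1 * c i) *s cvec (v i)"
    by (simp add: A_cvec T_u[OF assms] cvec_add cvec_scale)
  show "A *v cvec (v i) = complex_of_real (\<alpha>2 * c i) *s cvec (u i) + complex_of_real (1 - \<alpha>2) *s cvec (v i)"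
    by (simp add: A_cvec T_v[OF assms] cvec_add cvec_scale)
  have "2 - \<alpha>1 - \<alpha>2 + \<alpha>1 * \<alpha>2 * (c i)\<^sup>2 = ((1 - \<alpha>1) + \<alpha>1 * \<alpha>2 * (c i)\<^sup>2) + (1 - \<alpha>2)"
    by simp
  then show "lam1 i + lam2 i = complex_of_real ((1 - \<alpha>1) + \<alpha>1 * \<alpha>2 * (c i)\<^sup>2) + complex_of_real (1 - \<alpha>2)"
    by (simp only: lam_sum bq_c[OF im] of_real_add[symmetric])
  have "(1 - \<alpha>1) * (1 - \<alpha>2) = ((1 - \<alpha>1) + \<alpha>1 * \<alpha>2 * (c i)\<^sup>2) * (1 - \<alpha>2) - (\<alpha>2 * c i) * ((1 - \<alpha>2) * \<alpha>1 * c i)"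
    by (simp add: power2_eq_square algebra_simps)
  then show "lam1 i * lam2 i = complex_of_real ((1 - \<alpha>1) + \<alpha>1 * \<alpha>2 * (c i)\<^sup>2) * complex_of_real (1 - \<alpha>2)
      - complex_of_real (\<alpha>2 * c i) * complex_of_real ((1 - \<alpha>2) * \<alpha>1 * c i)"
    by (simp only: lam_prod cc_def of_real_mult[symmetric] of_real_diff[symmetric])
qed

lemma tail_pair:
  assumes "r \<le> i" "i < m"
  shows "[:- lam1 i, 1:] * [:- lam2 i, 1:] = [:- complex_of_real (1 - \<alpha>1), 1:] * [:- complex_of_real (1 - \<alpha>2), 1:]"
proof (rule pair_poly)
  have "c i = 0" by (rule r_zero[OF assms])
  then show "lam1 i + lam2 i = complex_of_real (1 - \<alpha>1) + complex_of_real (1 - \<alpha>2)"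
    using lam_sum[of i] bq_c[OF assms(2)] by simp
  show "lam1 i * lam2 i = complex_of_real (1 - \<alpha>1) * complex_of_real (1 - \<alpha>2)"
    using lam_prod[of i] by (simp add: cc_def)
qed

end


context PVT
begin

lemma main:
  "det (charmat A) = prod_mset (image_mset (\<lambda>l. [:- l, 1:])
      (replicate_mset s0 1 + replicate_mset (dim Y) cc
       + replicate_mset (dim V - dim U) (complex_of_real (1 - \<alpha>2))
       + replicate_mset (dim U - dim V) (complex_of_real (1 - \<alpha>1))
       + (\<Sum>i\<in>{s0..<m}. {#lam1 i, lam2 i#})))"
proof -
  define n where "n = CARD('n)"
  define N where "N = r - s0"
  have s0r: "s0 \<le> r" by (rule s0_le_r)
  have rm: "r \<le> m" by (rule r_le)
  have "\<forall>i. \<exists>Z1 Z2 \<mu>. i < r \<longrightarrow> (A *v Z1 = lam1 i *s Z1 \<and> A *v Z2 = lam2 i *s Z2 + \<mu> *s Z1 \<and>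
           cvec (u i) \<in> vec.span {Z1, Z2} \<and> cvec (v i) \<in> vec.span {Z1, Z2})"
    using block_exists by blast
  then obtain Z1 Z2 \<mu> where blk: "\<And>i. i < r \<Longrightarrow> A *v Z1 i = lam1 i *s Z1 i \<and>
      A *v Z2 i = lam2 i *s Z2 i + \<mu> i *s Z1 i \<and>
      cvec (u i) \<in> vec.span {Z1 i, Z2 i} \<and> cvec (v i) \<in> vec.span {Z1 i, Z2 i}"
    by metis
  obtain B1 where B1: "B1 \<subseteq> U'" "independent B1" "U' \<subseteq> span B1" "card B1 = dim U'"
    using basis_exists[of U'] by blast
  obtain B2 where B2: "B2 \<subseteq> V'" "independent B2" "V' \<subseteq> span B2" "card B2 = dim V'"
    using basis_exists[of V'] by blast
  obtain B3 where B3: "B3 \<subseteq> Y" "independent B3" "Y \<subseteq> span B3" "card B3 = dim Y"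
    using basis_exists[of Y] by blast
  obtain b1 where b1: "set b1 = B1" "distinct b1"
    using finite_distinct_list[OF independent_imp_finite[OF B1(2)]] by blast
  obtain b2 where b2: "set b2 = B2" "distinct b2"
    using finite_distinct_list[OF independent_imp_finite[OF B2(2)]] by blast
  obtain b3 where b3: "set b3 = B3" "distinct b3"
    using finite_distinct_list[OF independent_imp_finite[OF B3(2)]] by blast
  have lb1: "length b1 = dim U'" using b1 B1 distinct_card by metis
  have lb2: "length b2 = dim V'" using b2 B2 distinct_card by metis
  have lb3: "length b3 = dim Y" using b3 B3 distinct_card by metis
  define ps where "ps = map (\<lambda>x. (x, 1::real)) (map u [0..<s0]) @ map (\<lambda>x. (x, 1 - \<alpha>1)) b1
     @ map (\<lambda>x. (x, 1 - \<alpha>2)) b2 @ map (\<lambda>x. (x, (1 - \<alpha>1) * (1 - \<alpha>2))) b3"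
  have eig: "T x = l *\<^sub>R x" if "(x, l) \<in> set ps" for x l
    using that B1(1) B2(1) B3(1) b1 b2 b3 T_s0 T_U' T_V' T_Y unfolding ps_def by auto
  have lenps: "length ps = s0 + dim U' + dim V' + dim Y"
    by (simp add: ps_def lb1 lb2 lb3)
  have nN: "n = 2 * N + length ps"
    using dim_U' dim_V' dim_Y dim_W s0r rm unfolding lenps n_def N_def m_def by linarith
  define z where "z k = (if k < 2*N then (if even k then Z1 (s0 + k div 2) else Z2 (s0 + k div 2))
      else cvec (fst (ps ! (k - 2*N))))" for k
  define d where "d k = (if k < 2*N then (if even k then lam1 (s0 + k div 2) else lam2 (s0 + k div 2))
      else complex_of_real (snd (ps ! (k - 2*N))))" for k
  define Sz where "Sz = vec.span (z ` {..<n})"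
  have ps_in: "cvec x \<in> Sz" if xin: "x \<in> fst ` set ps" for x
  proof -
    obtain p where p: "p \<in> set ps" "x = fst p" using xin by blast
    obtain j where j0: "j < length ps" "ps ! j = p" using p(1) unfolding in_set_conv_nth by blast
    have j: "j < length ps" "fst (ps ! j) = x" using j0 p by auto
    have "z (2*N + j) = cvec x" using j by (simp add: z_def)
    moreover have "2*N + j < n" using j nN by simp
    ultimately have "cvec x \<in> z ` {..<n}" by (metis image_eqI lessThan_iff)
    then show ?thesis unfolding Sz_def by (rule vec.span_base)
  qed
  have blk_in: "vec.span {Z1 i, Z2 i} \<subseteq> Sz" if "s0 \<le> i" "i < r" for i
  proof -
    have iN: "i - s0 < N" using that by (simp add: N_def)
    have e1: "Z1 i = z (2*(i - s0))" using that iN by (simp add: z_def)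
    have e2: "Z2 i = z (2*(i - s0) + 1)" using that iN by (simp add: z_def)
    have lt: "2*(i - s0) + 1 < n" using that nN N_def by simp
    have "Z1 i \<in> z ` {..<n}" by (rule image_eqI[where f=z, OF e1]) (use lt in simp)
    moreover have "Z2 i \<in> z ` {..<n}" by (rule image_eqI[where f=z, OF e2]) (use lt in simp)
    ultimately have "{Z1 i, Z2 i} \<subseteq> z ` {..<n}" by simp
    then show ?thesis unfolding Sz_def by (rule vec.span_mono)
  qed
  have C: "subspace {x. cvec x \<in> Sz}"
    unfolding subspace_def Sz_def
    by (auto simp: cvec_zero cvec_add cvec_scale vec.span_zero vec.span_add vec.span_scale)
  have inC: "cvec x \<in> Sz" for x
  proof -
    have uC: "cvec (u i) \<in> Sz" if "i < r" for i
    proof (cases "i < s0")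
      case True
      then have "u i \<in> fst ` set ps" unfolding ps_def by force
      then show ?thesis by (rule ps_in)
    next
      case False
      then show ?thesis using blk[OF that] blk_in[of i] that by auto
    qed
    have vC: "cvec (v i) \<in> Sz" if "i < r" for i
    proof (cases "i < s0")
      case True
      then show ?thesis using uC[OF that] uv_eq by simp
    next
      case False
      then show ?thesis using blk[OF that] blk_in[of i] that by auto
    qed
    have B1C: "B1 \<subseteq> {x. cvec x \<in> Sz}"
    proof
      fix x assume "x \<in> B1"
      then have "x \<in> fst ` set ps" using b1 unfolding ps_def by force
      then show "x \<in> {x. cvec x \<in> Sz}" using ps_in by simp
    qed
    have B2C: "B2 \<subseteq> {x. cvec x \<in> Sz}"
    proof
      fix x assume "x \<in> B2"
      then have "x \<in> fst ` set ps" using b2 unfolding ps_def by force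
      then show "x \<in> {x. cvec x \<in> Sz}" using ps_in by simp
    qed
    have B3C: "B3 \<subseteq> {x. cvec x \<in> Sz}"
    proof
      fix x assume "x \<in> B3"
      then have "x \<in> fst ` set ps" using b3 unfolding ps_def by force
      then show "x \<in> {x. cvec x \<in> Sz}" using ps_in by simp
    qed
    have "x \<in> {x. cvec x \<in> Sz}"
    proof (rule building_blocks_span[OF C])
      show "U' \<subseteq> {x. cvec x \<in> Sz}" using B1(3) span_minimal[OF B1C C] by blast
      show "V' \<subseteq> {x. cvec x \<in> Sz}" using B2(3) span_minimal[OF B2C C] by blast
      show "Y \<subseteq> {x. cvec x \<in> Sz}" using B3(3) span_minimal[OF B3C C] by blast
    qed (use uC vC in auto)
    then show ?thesis by simp
  qed
  have span: "vec.span (z ` {..<CARD('n)}) = UNIV"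
  proof -
    have "\<zeta> \<in> Sz" for \<zeta>
    proof -
      have "cvec (\<chi> i. Re (\<zeta>$i)) + \<i> *s cvec (\<chi> i. Im (\<zeta>$i)) \<in> Sz"
        unfolding Sz_def using inC[unfolded Sz_def] by (intro vec.span_add vec.span_scale) auto
      then show ?thesis using complex_vec_decomp[of \<zeta>] by simp
    qed
    then show ?thesis unfolding Sz_def n_def by auto
  qed
  have tri: "A *v z k - d k *s z k \<in> vec.span (z ` {..<k})" if k: "k < CARD('n)" for k
  proof (cases "k < 2*N")
    case True
    define i where "i = s0 + k div 2"
    have ir: "i < r" using True unfolding i_def N_def by linarith
    show ?thesis
    proof (cases "even k")
      case True
      then have "A *v z k - d k *s z k = 0"
        using \<open>k < 2*N\<close> blk[OF ir] by (simp add: z_def d_def i_def[symmetric])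
      then show ?thesis by (simp add: vec.span_zero)
    next
      case False
      then have k1: "k - 1 < k" "even (k - 1)" "(k - 1) div 2 = k div 2" "k - 1 < 2*N"
        using \<open>k < 2*N\<close> by (auto elim: oddE)
      have "z (k - 1) = Z1 i" using k1 by (simp add: z_def i_def)
      then have "A *v z k - d k *s z k = \<mu> i *s z (k - 1)"
        using \<open>k < 2*N\<close> blk[OF ir] False by (simp add: z_def d_def i_def[symmetric])
      also have "\<dots> \<in> vec.span (z ` {..<k})"
        using k1 by (intro vec.span_scale vec.span_base) auto
      finally show ?thesis .
    qed
  next
    case False
    define j where "j = k - 2*N"
    have j: "j < length ps" using False k nN unfolding j_def n_def by linarith
    obtain x l where xl: "ps ! j = (x, l)" by fastforce
    have "(x, l) \<in> set ps" using j xl nth_mem by metis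
    then have "T x = l *\<^sub>R x" by (rule eig)
    then have "A *v z k - d k *s z k = 0"
      using False xl by (simp add: z_def d_def j_def[symmetric] A_cvec cvec_scale)
    then show ?thesis by (simp add: vec.span_zero)
  qed
  have cp: "det (charmat A) = (\<Prod>k<n. [:- d k, 1:])"
    unfolding n_def by (rule charpoly_triangular_basis[OF span tri])
  define f where "f l = [:- l, 1:]" for l :: complex
  define F where "F i = f (lam1 i) * f (lam2 i)" for i
  have "(\<Prod>k<n. [:- d k, 1:]) = (\<Prod>k\<in>{0..<2*N}. [:- d k, 1:]) * (\<Prod>k\<in>{2*N..<n}. [:- d k, 1:])"
    using prod.atLeastLessThan_concat[where g="\<lambda>k. [:- d k, 1:]" and m=0 and n="2*N" and p=n] nN
    by (simp add: lessThan_atLeast0)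
  also have "(\<Prod>k\<in>{0..<2*N}. [:- d k, 1:]) = (\<Prod>i\<in>{s0..<r}. F i)"
  proof -
    have "(\<Prod>k\<in>{0..<2*N}. [:- d k, 1:]) = (\<Prod>j<N. [:- d (2*j), 1:] * [:- d (2*j+1), 1:])"
      using prod_pairs[of "\<lambda>k. [:- d k, 1:]" N] by (simp add: lessThan_atLeast0)
    also have "\<dots> = (\<Prod>j<N. F (j + s0))"
      by (rule prod.cong) (auto simp: d_def F_def f_def add.commute)
    also have "\<dots> = (\<Prod>i\<in>{0 + s0..<N + s0}. F i)"
      using prod.shift_bounds_nat_ivl[of F 0 s0 N] by (simp add: lessThan_atLeast0)
    also have "N + s0 = r" using s0r by (simp add: N_def)
    finally show ?thesis by simp
  qed
  also have "(\<Prod>k\<in>{2*N..<n}. [:- d k, 1:]) = (\<Prod>j\<in>{0..<length ps}. f (complex_of_real (snd (ps ! j))))"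
  proof -
    have "(\<Prod>k\<in>{2*N..<n}. [:- d k, 1:]) = (\<Prod>k\<in>{0 + 2*N..<length ps + 2*N}. [:- d k, 1:])"
      using nN by (simp add: add.commute)
    also have "\<dots> = (\<Prod>j\<in>{0..<length ps}. [:- d (j + 2*N), 1:])"
      by (rule prod.shift_bounds_nat_ivl)
    also have "\<dots> = (\<Prod>j\<in>{0..<length ps}. f (complex_of_real (snd (ps ! j))))"
      by (rule prod.cong) (auto simp: d_def f_def)
    finally show ?thesis .
  qed
  also have "(\<Prod>j\<in>{0..<length ps}. f (complex_of_real (snd (ps ! j))))
      = prod_list (map (\<lambda>p. f (complex_of_real (snd p))) ps)"
    by (simp add: prod.list_conv_set_nth)
  also have "\<dots> = f 1 ^ s0 * f (complex_of_real (1 - \<alpha>1)) ^ dim U' * f (complex_of_real (1 - \<alpha>2)) ^ dim V'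
      * f cc ^ dim Y"
    by (simp add: ps_def o_def map_replicate_const lb1 lb2 lb3 cc_def mult.assoc)
  finally have lhs: "det (charmat A) = (\<Prod>i\<in>{s0..<r}. F i) * (f 1 ^ s0 * f (complex_of_real (1 - \<alpha>1)) ^ dim U'
      * f (complex_of_real (1 - \<alpha>2)) ^ dim V' * f cc ^ dim Y)"
    using cp by simp
  have tail: "(\<Prod>i\<in>{r..<m}. F i) = (f (complex_of_real (1 - \<alpha>1)) * f (complex_of_real (1 - \<alpha>2))) ^ (m - r)"
  proof -
    have "(\<Prod>i\<in>{r..<m}. F i) = (\<Prod>i\<in>{r..<m}. f (complex_of_real (1 - \<alpha>1)) * f (complex_of_real (1 - \<alpha>2)))"
    proof (rule prod.cong)
      fix i assume "i \<in> {r..<m}"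
      then show "F i = f (complex_of_real (1 - \<alpha>1)) * f (complex_of_real (1 - \<alpha>2))"
        unfolding F_def f_def using tail_pair by auto
    qed simp
    then show ?thesis by simp
  qed
  have rhs: "prod_mset (image_mset (\<lambda>l. [:- l, 1:])
      (replicate_mset s0 1 + replicate_mset (dim Y) cc
       + replicate_mset (dim V - dim U) (complex_of_real (1 - \<alpha>2))
       + replicate_mset (dim U - dim V) (complex_of_real (1 - \<alpha>1))
       + (\<Sum>i\<in>{s0..<m}. {#lam1 i, lam2 i#})))
     = f 1 ^ s0 * f cc ^ dim Y * f (complex_of_real (1 - \<alpha>2)) ^ (dim V - dim U)
       * f (complex_of_real (1 - \<alpha>1)) ^ (dim U - dim V) * (\<Prod>i\<in>{s0..<m}. F i)"
    by (simp add: prod_mset_image_sum f_def F_def)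
  have split: "(\<Prod>i\<in>{s0..<m}. F i) = (\<Prod>i\<in>{s0..<r}. F i) * (\<Prod>i\<in>{r..<m}. F i)"
    using prod.atLeastLessThan_concat[of s0 r m F] s0r rm by simp
  have e1: "dim U' = (dim U - dim V) + (m - r)" using dim_U' rm unfolding m_def by linarith
  have e2: "dim V' = (dim V - dim U) + (m - r)" using dim_V' rm unfolding m_def by linarith
  show ?thesis
    unfolding lhs rhs split tail e1 e2
    by (simp add: power_add power_mult_distrib ac_simps)
qed

end


theorem theorem1:
  fixes U V :: "(real^'n) set" and \<alpha>1 \<alpha>2 :: real
    and u v :: "nat \<Rightarrow> real^'n"
  assumes "subspace U" and "subspace V"
    and "principal_vectors U V u v"
  shows "let n = CARD('n); p = dim U; q = dim V; s = dim (U \<inter> V);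
             \<theta> = principal_angle u v;
             b = (\<lambda>i. complex_of_real (2 - \<alpha>1 - \<alpha>2 + \<alpha>1 * \<alpha>2 * (cos (\<theta> i))\<^sup>2));
             c = complex_of_real ((1 - \<alpha>1) * (1 - \<alpha>2));
             lam1 = (\<lambda>i. b i / 2 + csqrt ((b i / 2)\<^sup>2 - c));
             lam2 = (\<lambda>i. b i / 2 - csqrt ((b i / 2)\<^sup>2 - c))
         in has_eigenvalues_mset (\<lambda>x. relaxed_proj \<alpha>2 U (relaxed_proj \<alpha>1 V x))
              (replicate_mset s 1
               + replicate_mset (s + n - p - q) c
               + replicate_mset (q - p) (complex_of_real (1 - \<alpha>2))
               + replicate_mset (p - q) (complex_of_real (1 - \<alpha>1))
               + (\<Sum>i\<in>{s..<min p q}. {#lam1 i, lam2 i#}))"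
proof -
  interpret PVT U V u v \<alpha>1 \<alpha>2
    by unfold_locales (fact assms)+
  have T_eq: "(\<lambda>x. relaxed_proj \<alpha>2 U (relaxed_proj \<alpha>1 V x)) = T"
    by (simp add: T_def[abs_def])
  have s: "dim (U \<inter> V) = s0" by (rule dim_UV)
  have Yd: "s0 + CARD('n) - dim U - dim V = dim Y"
    using dim_Y dim_W by linarith
  have cp: "charpoly (matrix T) = det (charmat A)" by (simp add: charpoly_charmat A_def)
  show ?thesis
    unfolding Let_def has_eigenvalues_mset_def T_eq s Yd cp main
    unfolding m_def lam1_def lam2_def bq_def cc_def ..
qed

end
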